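(* Let $P=\{p_1,\dots,p_n\}\subset\mathbb{R}^d$ be a finite point set spanning $\mathbb{R}^d$ affinely. Let $M\colon\mathbb{R}^{dn}\to\mathbb{R}^{\binom n2}$, $(v_1,\dots,v_n)\mapsto(\langle v_i-v_j,p_i-p_j\rangle)_{i<j}$, and $\Delta\colon\mathbb{R}^{\binom n2}\to\mathbb{R}^{\mathcal C(P)}$, $(f_{ij})\mapsto\bigl(\sum_{i<j,\ i,j\in C}w^C_{ij}f_{ij}\bigr)_{C\in\mathcal C(P)}$. Then $\operatorname{Im}M\subseteq\ker\Delta$. If moreover $P$ contains $d$ affinely independent points whose affine hull contains no other point of $P$, then $\operatorname{Im}M=\ker\Delta$.
   Context: $\mathcal C(P)$ is the set of circuits of $P$, i.e. minimal affinely dependent subsets. For a circuit $C$ there is an affine dependence $\sum_{i\in C}\alpha_ip_i=0$, $\sum_{i\in C}\alpha_i=0$, unique up to scaling with all $\alpha_i\ne0$; set $w^C_{ij}=\alpha_i\alpha_j$ for $i,j\in C$ (this is, up to scaling, the unique self-stress of the complete graph on $C$, i.e. $\sum_{j\in C}w^C_{ij}(p_i-p_j)=0$ for all $i\in C$). *)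

theory Defs
  imports "HOL-Analysis.Analysis"
begin

text \<open>Point configuration: points p 0, ..., p (n-1) in a Euclidean space of dimension d = DIM('a),
  indexed by {..<n}. Circuits are represented by index sets.\<close>

definition is_circuit :: "(nat \<Rightarrow> 'a::euclidean_space) \<Rightarrow> nat \<Rightarrow> nat set \<Rightarrow> bool" where
  "is_circuit p n C \<longleftrightarrow> C \<subseteq> {..<n} \<and> affine_dependent (p ` C) \<and>
      (\<forall>D. D \<subset> C \<longrightarrow> \<not> affine_dependent (p ` D))"

definition circuits :: "(nat \<Rightarrow> 'a::euclidean_space) \<Rightarrow> nat \<Rightarrow> nat set set" where
  "circuits p n = {C. is_circuit p n C}"

text \<open>An affine dependence on C with all coefficients nonzero (unique up to scaling for a circuit).\<close>
definition is_circuit_dependence :: "(nat \<Rightarrow> 'a::euclidean_space) \<Rightarrow> nat set \<Rightarrow> (nat \<Rightarrow> real) \<Rightarrow> bool" where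
  "is_circuit_dependence p C \<alpha> \<longleftrightarrow>
     (\<forall>i\<in>C. \<alpha> i \<noteq> 0) \<and> (\<Sum>i\<in>C. \<alpha> i) = 0 \<and> (\<Sum>i\<in>C. \<alpha> i *\<^sub>R p i) = 0"

definition circuit_coeff :: "(nat \<Rightarrow> 'a::euclidean_space) \<Rightarrow> nat set \<Rightarrow> nat \<Rightarrow> real" where
  "circuit_coeff p C = (SOME \<alpha>. is_circuit_dependence p C \<alpha>)"

definition circuit_weight :: "(nat \<Rightarrow> 'a::euclidean_space) \<Rightarrow> nat set \<Rightarrow> nat \<Rightarrow> nat \<Rightarrow> real" where
  "circuit_weight p C i j = circuit_coeff p C i * circuit_coeff p C j"

text \<open>R^(n choose 2): functions f i j, supported on pairs i < j < n.\<close>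
definition edge_space :: "nat \<Rightarrow> (nat \<Rightarrow> nat \<Rightarrow> real) set" where
  "edge_space n = {f. \<forall>i j. \<not> (i < j \<and> j < n) \<longrightarrow> f i j = 0}"

definition rigidity_map :: "(nat \<Rightarrow> 'a::euclidean_space) \<Rightarrow> nat \<Rightarrow> (nat \<Rightarrow> 'a) \<Rightarrow> (nat \<Rightarrow> nat \<Rightarrow> real)" where
  "rigidity_map p n v = (\<lambda>i j. if i < j \<and> j < n then inner (v i - v j) (p i - p j) else 0)"

definition image_M :: "(nat \<Rightarrow> 'a::euclidean_space) \<Rightarrow> nat \<Rightarrow> (nat \<Rightarrow> nat \<Rightarrow> real) set" where
  "image_M p n = range (rigidity_map p n)"

definition Delta_map :: "(nat \<Rightarrow> 'a::euclidean_space) \<Rightarrow> nat \<Rightarrow> (nat \<Rightarrow> nat \<Rightarrow> real) \<Rightarrow> nat set \<Rightarrow> real" where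
  "Delta_map p n f C = (\<Sum>(i,j)\<in>{(i,j). i \<in> C \<and> j \<in> C \<and> i < j}. circuit_weight p C i j * f i j)"

definition kernel_Delta :: "(nat \<Rightarrow> 'a::euclidean_space) \<Rightarrow> nat \<Rightarrow> (nat \<Rightarrow> nat \<Rightarrow> real) set" where
  "kernel_Delta p n = {f \<in> edge_space n. \<forall>C\<in>circuits p n. Delta_map p n f C = 0}"

end

theory Submission
  imports Defs
begin

lemma linear_inner_rep:
  fixes g :: "'a::euclidean_space \<Rightarrow> real"
  assumes "linear g"
  shows "\<exists>x. \<forall>y. g y = inner x y"
proof -
  define x where "x = (\<Sum>b\<in>Basis. g b *\<^sub>R b)"
  have "g y = inner x y" for y
  proof -
    have "g y = g (\<Sum>b\<in>Basis. (y \<bullet> b) *\<^sub>R b)" by (simp add: euclidean_representation)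
    also have "\<dots> = (\<Sum>b\<in>Basis. (y \<bullet> b) * g b)"
      using assms by (simp add: linear_sum linear_scale)
    also have "\<dots> = (\<Sum>b\<in>Basis. g b * (b \<bullet> y))"
      by (simp add: inner_commute mult.commute)
    also have "\<dots> = inner x y" unfolding x_def
      by (simp add: inner_sum_left)
    finally show ?thesis .
  qed
  then show ?thesis by blast
qed

lemma solve_inner:
  fixes u :: "nat \<Rightarrow> 'a::euclidean_space"
  assumes "inj_on u J" "independent (u ` J)"
  shows "\<exists>x. \<forall>j\<in>J. inner x (u j) = c j"
proof -
  obtain g where g: "linear g" "\<forall>y\<in>u ` J. g y = (c \<circ> inv_into J u) y"
    using linear_independent_extend[OF assms(2)] by blast
  obtain x where x: "\<forall>y. g y = inner x y" using linear_inner_rep[OF g(1)] by blast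
  show ?thesis
  proof (intro exI ballI)
    fix j assume "j \<in> J"
    then show "inner x (u j) = c j" using g(2) x assms(1) by (simp add: inv_into_f_f)
  qed
qed

lemma circuit_dep_exists:
  assumes inj: "inj_on p {..<n}" and C: "is_circuit p n C"
  shows "\<exists>\<alpha>. is_circuit_dependence p C \<alpha>"
proof -
  have Cn: "C \<subseteq> {..<n}" and dep: "affine_dependent (p ` C)"
    and minl: "\<And>D. D \<subset> C \<Longrightarrow> \<not> affine_dependent (p ` D)"
    using C unfolding is_circuit_def by auto
  have fin: "finite C" using Cn finite_subset by blast
  have injC: "inj_on p C" using inj Cn inj_on_subset by blast
  obtain U where U: "sum U (p ` C) = 0" "\<exists>v\<in>p ` C. U v \<noteq> 0" "(\<Sum>v\<in>p ` C. U v *\<^sub>R v) = 0"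
    using dep affine_dependent_explicit_finite[of "p ` C"] fin by blast
  have nz: "\<forall>i\<in>C. U (p i) \<noteq> 0"
  proof (rule ccontr)
    assume "\<not> ?thesis"
    then obtain i where i: "i \<in> C" "U (p i) = 0" by blast
    define D where "D = {k\<in>C. U (p k) \<noteq> 0}"
    have DC: "D \<subset> C" using i D_def by auto
    have pD: "p ` D = {x\<in>p ` C. U x \<noteq> 0}" unfolding D_def by auto
    have finD: "finite (p ` D)" using fin D_def by auto
    have "sum U (p ` D) = sum U (p ` C)"
      unfolding pD by (rule sum.mono_neutral_left) (use fin in auto)
    moreover have "(\<Sum>v\<in>p ` D. U v *\<^sub>R v) = (\<Sum>v\<in>p ` C. U v *\<^sub>R v)"
      unfolding pD by (rule sum.mono_neutral_left) (use fin in auto)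
    moreover have "\<exists>v\<in>p ` D. U v \<noteq> 0" using U(2) pD by auto
    ultimately have "affine_dependent (p ` D)"
      using U affine_dependent_explicit_finite[OF finD] by auto
    with minl[OF DC] show False by blast
  qed
  have "is_circuit_dependence p C (\<lambda>i. U (p i))"
    unfolding is_circuit_dependence_def
    using nz U sum.reindex[OF injC, of U] sum.reindex[OF injC, of "\<lambda>v. U v *\<^sub>R v"] by auto
  then show ?thesis by blast
qed

lemma full_sum_zero:
  fixes p v :: "nat \<Rightarrow> 'a::euclidean_space"
  assumes "finite C" "(\<Sum>i\<in>C. a i) = 0" "(\<Sum>i\<in>C. a i *\<^sub>R p i) = 0"
  shows "(\<Sum>i\<in>C. \<Sum>j\<in>C. a i * a j * inner (v i - v j) (p i - p j)) = 0"
proof -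
  have e: "a i * a j * inner (v i - v j) (p i - p j) =
     a j * (a i * inner (v i) (p i)) + a i * (a j * inner (v j) (p j))
     - inner (a i *\<^sub>R v i) (a j *\<^sub>R p j) - inner (a j *\<^sub>R v j) (a i *\<^sub>R p i)" for i j
    by (simp add: inner_diff_left inner_diff_right algebra_simps)
  have s1: "(\<Sum>i\<in>C. \<Sum>j\<in>C. a j * (a i * inner (v i) (p i))) = 0"
    using assms(2) by (simp add: sum_distrib_right[symmetric])
  have s2: "(\<Sum>i\<in>C. \<Sum>j\<in>C. a i * (a j * inner (v j) (p j))) = 0"
    using assms(2) by (simp add: sum_distrib_right[symmetric] sum_distrib_left[symmetric])
  have s3: "(\<Sum>i\<in>C. \<Sum>j\<in>C. inner (a i *\<^sub>R v i) (a j *\<^sub>R p j)) = 0"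
    using assms(3) by (simp add: inner_sum_right[symmetric] inner_sum_left[symmetric] del: inner_scaleR_left inner_scaleR_right)
  have s4: "(\<Sum>i\<in>C. \<Sum>j\<in>C. inner (a j *\<^sub>R v j) (a i *\<^sub>R p i)) = 0"
    using assms(3) by (simp add: inner_sum_right[symmetric] inner_sum_left[symmetric] del: inner_scaleR_left inner_scaleR_right)
  show ?thesis
    unfolding e using s1 s2 s3 s4 by (simp add: sum.distrib sum_subtractf)
qed

lemma half_sum:
  fixes h :: "nat \<Rightarrow> nat \<Rightarrow> real"
  assumes "finite C" "\<And>i j. h i j = h j i" "\<And>i. h i i = 0"
  shows "(\<Sum>i\<in>C. \<Sum>j\<in>C. h i j) = 2 * (\<Sum>(i,j)\<in>{(i,j). i \<in> C \<and> j \<in> C \<and> i < j}. h i j)"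
proof -
  define L where "L = {(i,j). i \<in> C \<and> j \<in> C \<and> i < j}"
  define G where "G = {(i,j). i \<in> C \<and> j \<in> C \<and> j < i}"
  define Dg where "Dg = {(i,j). i \<in> C \<and> j \<in> C \<and> i = j}"
  have CC: "C \<times> C = L \<union> G \<union> Dg" unfolding L_def G_def Dg_def by auto
  have fin: "finite L" "finite G" "finite Dg"
    using assms(1) unfolding L_def G_def Dg_def
    by (auto intro: finite_subset[of _ "C \<times> C"])
  have "(\<Sum>i\<in>C. \<Sum>j\<in>C. h i j) = (\<Sum>(i,j)\<in>C \<times> C. h i j)"
    by (simp add: sum.cartesian_product)
  also have "\<dots> = (\<Sum>(i,j)\<in>L. h i j) + (\<Sum>(i,j)\<in>G. h i j) + (\<Sum>(i,j)\<in>Dg. h i j)"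
    unfolding CC using fin
    by (subst sum.union_disjoint, auto simp: L_def G_def Dg_def intro: sum.union_disjoint)+
  also have "(\<Sum>(i,j)\<in>Dg. h i j) = 0"
    using assms(3) unfolding Dg_def by (intro sum.neutral) auto
  also have "(\<Sum>(i,j)\<in>G. h i j) = (\<Sum>(i,j)\<in>L. h i j)"
  proof -
    have "G = prod.swap ` L" unfolding G_def L_def by auto
    moreover have "inj_on prod.swap L" by (auto simp add: inj_on_def)
    ultimately show ?thesis
      by (simp add: sum.reindex case_prod_beta assms(2))
  qed
  finally show ?thesis unfolding L_def by simp
qed

lemma part1:
  assumes inj: "inj_on p {..<n}" and C: "C \<in> circuits p n"
  shows "Delta_map p n (rigidity_map p n v) C = 0"
proof -
  have Cc: "is_circuit p n C" using C circuits_def by auto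
  have Cn: "C \<subseteq> {..<n}" using Cc unfolding is_circuit_def by auto
  have fin: "finite C" using Cn finite_subset by blast
  define a where "a = circuit_coeff p C"
  have dep: "is_circuit_dependence p C a"
    unfolding a_def circuit_coeff_def using circuit_dep_exists[OF inj Cc] by (rule someI_ex)
  define h where "h i j = a i * a j * inner (v i - v j) (p i - p j)" for i j
  have "Delta_map p n (rigidity_map p n v) C = (\<Sum>(i,j)\<in>{(i,j). i \<in> C \<and> j \<in> C \<and> i < j}. h i j)"
    unfolding Delta_map_def rigidity_map_def circuit_weight_def h_def a_def
    using Cn by (intro sum.cong) auto
  also have "\<dots> = (\<Sum>i\<in>C. \<Sum>j\<in>C. h i j) / 2"
    by (subst half_sum[OF fin]) (auto simp: h_def algebra_simps inner_commute)
  also have "(\<Sum>i\<in>C. \<Sum>j\<in>C. h i j) = 0"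
    unfolding h_def using dep fin full_sum_zero[of C a p v] unfolding is_circuit_dependence_def by auto
  finally show ?thesis by simp
qed

lemma indep_diffs:
  fixes p :: "nat \<Rightarrow> 'a::euclidean_space"
  assumes inj: "inj_on p {..<n}" and J: "J \<subseteq> {..<n}" and N: "N < n" "N \<notin> J"
    and ind: "\<not> affine_dependent (p ` insert N J)"
  shows "inj_on (\<lambda>j. - p N + p j) J" "independent ((\<lambda>j. - p N + p j) ` J)"
proof -
  show "inj_on (\<lambda>j. - p N + p j) J"
    using inj J by (auto simp: inj_on_def)
  have "p N \<notin> p ` J" using inj J N by (auto simp: inj_on_def)
  then have "\<not> dependent ((\<lambda>x. - p N + x) ` (p ` J))"
    using ind affine_dependent_iff_dependent[of "p N" "p ` J"] by simp
  then show "independent ((\<lambda>j. - p N + p j) ` J)" by (simp add: image_image)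
qed

lemma phase1:
  fixes p :: "nat \<Rightarrow> 'a::euclidean_space"
  assumes inj: "inj_on p {..<n}" and Sn: "S \<subseteq> {..<n}" and indS: "\<not> affine_dependent (p ` S)"
  shows "\<exists>v. \<forall>i j. i < j \<and> j < N \<and> i \<in> S \<and> j \<in> S \<longrightarrow> inner (v i - v j) (p i - p j) = f i j"
proof (induction N)
  case 0
  then show ?case by auto
next
  case (Suc N)
  then obtain v where v: "\<forall>i j. i < j \<and> j < N \<and> i \<in> S \<and> j \<in> S \<longrightarrow> inner (v i - v j) (p i - p j) = f i j"
    by blast
  show ?case
  proof (cases "N \<in> S")
    case False
    then show ?thesis using v by (metis less_SucE)
  next
    case True
    define J where "J = {j\<in>S. j < N}"
    define u where "u j = - p N + p j" for j
    have NS: "N < n" using True Sn by auto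
    have ind: "\<not> affine_dependent (p ` insert N J)"
    proof -
      have "p ` insert N J \<subseteq> p ` S" using True unfolding J_def by auto
      then show ?thesis using affine_independent_subset[OF indS] by blast
    qed
    have iu: "inj_on u J" "independent (u ` J)"
      using indep_diffs[OF inj _ NS _ ind] Sn unfolding u_def J_def by auto
    obtain x where x: "\<forall>j\<in>J. inner x (u j) = inner (v j) (u j) - f j N"
      using solve_inner[OF iu, of "\<lambda>j. inner (v j) (u j) - f j N"] by blast
    have "\<forall>i j. i < j \<and> j < Suc N \<and> i \<in> S \<and> j \<in> S \<longrightarrow> inner ((v(N:=x)) i - (v(N:=x)) j) (p i - p j) = f i j"
    proof (intro allI impI)
      fix i j assume a: "i < j \<and> j < Suc N \<and> i \<in> S \<and> j \<in> S"
      show "inner ((v(N:=x)) i - (v(N:=x)) j) (p i - p j) = f i j"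
      proof (cases "j = N")
        case True
        then have "i \<in> J" using a J_def by auto
        then have "inner x (u i) = inner (v i) (u i) - f i N" using x by auto
        moreover have "u i = p i - p j" using True u_def by simp
        ultimately show ?thesis using True a by (simp add: inner_diff_left)
      next
        case False
        then show ?thesis using a v by auto
      qed
    qed
    then show ?thesis by blast
  qed
qed

lemma realize:
  fixes p :: "nat \<Rightarrow> 'a::euclidean_space"
  assumes inj: "inj_on p {..<n}" and Sn: "S \<subseteq> {..<n}" and indS: "\<not> affine_dependent (p ` S)"
    and hull: "\<forall>i<n. p i \<in> affine hull (p ` S) \<longrightarrow> i \<in> S"
  shows "\<exists>v. \<forall>i j. i < j \<and> j < n \<and> (i \<in> S \<or> j \<in> S) \<longrightarrow> inner (v i - v j) (p i - p j) = f i j"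
proof -
  obtain v0 where v0: "\<forall>i j. i < j \<and> j < n \<and> i \<in> S \<and> j \<in> S \<longrightarrow> inner (v0 i - v0 j) (p i - p j) = f i j"
    using phase1[OF inj Sn indS] by blast
  define c where "c q j = inner (v0 j) (- p q + p j) - (if j < q then f j q else f q j)" for q j
  define v where "v i = (if i \<in> S then v0 i else (SOME x. \<forall>j\<in>S. inner x (- p i + p j) = c i j))" for i
  have vq: "\<forall>j\<in>S. inner (v q) (- p q + p j) = c q j" if q: "q < n" "q \<notin> S" for q
  proof -
    have "p q \<notin> affine hull (p ` S)" using hull q by blast
    then have ind: "\<not> affine_dependent (p ` insert q S)"
      using affine_independent_insert[OF indS] by simp
    have iu: "inj_on (\<lambda>j. - p q + p j) S" "independent ((\<lambda>j. - p q + p j) ` S)"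
      using indep_diffs[OF inj Sn q ind] by auto
    have "\<exists>x. \<forall>j\<in>S. inner x (- p q + p j) = c q j"
      using solve_inner[OF iu] by blast
    then have "\<forall>j\<in>S. inner (SOME x. \<forall>j\<in>S. inner x (- p q + p j) = c q j) (- p q + p j) = c q j"
      by (rule someI_ex)
    then show ?thesis unfolding v_def using q(2) by simp
  qed
  have "inner (v i - v j) (p i - p j) = f i j" if a: "i < j" "j < n" "i \<in> S \<or> j \<in> S" for i j
  proof (cases "i \<in> S \<and> j \<in> S")
    case True
    then show ?thesis using v0 a by (simp add: v_def)
  next
    case False
    show ?thesis
    proof (cases "i \<in> S")
      case True
      with False have jS: "j \<notin> S" by blast
      have "inner (v j) (- p j + p i) = c j i" using vq[OF a(2) jS] True by blast
      then show ?thesis using True jS a unfolding c_def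
        by (simp add: v_def inner_diff_left inner_diff_right inner_add_right algebra_simps)
    next
      case iS: False
      with a have jS: "j \<in> S" by blast
      have iN: "i < n" using a by simp
      have "inner (v i) (- p i + p j) = c i j" using vq[OF iN iS] jS by blast
      then show ?thesis using iS jS a unfolding c_def
        by (simp add: v_def inner_diff_left inner_diff_right inner_add_right algebra_simps)
    qed
  qed
  then show ?thesis by blast
qed

lemma circuit_through:
  fixes p :: "nat \<Rightarrow> 'a::euclidean_space"
  assumes inj: "inj_on p {..<n}" and Sn: "S \<subseteq> {..<n}" and indS: "\<not> affine_dependent (p ` S)"
    and cS: "card S = DIM('a)"
    and hull: "\<forall>i<n. p i \<in> affine hull (p ` S) \<longrightarrow> i \<in> S"
    and ij: "i < n" "j < n" "i \<notin> S" "j \<notin> S" "i \<noteq> j"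
  shows "\<exists>C. is_circuit p n C \<and> i \<in> C \<and> j \<in> C \<and> C \<subseteq> insert i (insert j S)"
proof -
  define T where "T = insert i (insert j S)"
  have finS: "finite S" using Sn finite_subset by blast
  have Tn: "T \<subseteq> {..<n}" using Sn ij T_def by auto
  have finT: "finite T" using finS T_def by auto
  have ind1: "\<not> affine_dependent (p ` insert q S)" if "q < n" "q \<notin> S" for q
  proof -
    have "p q \<notin> affine hull (p ` S)" using hull that by blast
    then show ?thesis using affine_independent_insert[OF indS] by simp
  qed
  have "card (p ` T) = card T" using inj Tn by (metis card_image inj_on_subset)
  also have "card T = DIM('a) + 2" using cS ij finS T_def by simp
  finally have depT: "affine_dependent (p ` T)"
    using affine_dependent_biggerset[of "p ` T"] finT by simp
  define F where "F = {D. D \<subseteq> T \<and> affine_dependent (p ` D)}"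
  have finF: "finite F" using finT unfolding F_def by simp
  have "T \<in> F" using depT F_def by simp
  then obtain D where D: "D \<in> F" "\<not> (\<exists>x\<in>F. x < D)"
    using ex_min_if_finite[OF finF] by blast
  have DT: "D \<subseteq> T" and depD: "affine_dependent (p ` D)" using D(1) F_def by auto
  have circ: "is_circuit p n D"
    unfolding is_circuit_def
  proof (intro conjI allI impI)
    show "D \<subseteq> {..<n}" using DT Tn by blast
    show "affine_dependent (p ` D)" by (fact depD)
    fix D' assume "D' \<subset> D"
    then show "\<not> affine_dependent (p ` D')" using D(2) DT unfolding F_def by auto
  qed
  have iD: "i \<in> D"
  proof (rule ccontr)
    assume "i \<notin> D"
    then have "p ` D \<subseteq> p ` insert j S" using DT T_def by auto
    then show False using affine_independent_subset[OF ind1[OF ij(2) ij(4)]] depD by blast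
  qed
  have jD: "j \<in> D"
  proof (rule ccontr)
    assume "j \<notin> D"
    then have "p ` D \<subseteq> p ` insert i S" using DT T_def by auto
    then show False using affine_independent_subset[OF ind1[OF ij(1) ij(3)]] depD by blast
  qed
  show ?thesis using circ iD jD DT T_def by blast
qed

lemma Delta_diff:
  "Delta_map p n f C - Delta_map p n g C =
   (\<Sum>(a,b)\<in>{(a,b). a \<in> C \<and> b \<in> C \<and> a < b}. circuit_weight p C a b * (f a b - g a b))"
  unfolding Delta_map_def sum_subtractf[symmetric] by (intro sum.cong) (auto simp: right_diff_distrib)

theorem proposition6p1:
  fixes p :: "nat \<Rightarrow> 'a::euclidean_space" and n :: nat
  assumes inj: "inj_on p {..<n}"
    and span: "affine hull (p ` {..<n}) = UNIV"
  shows "image_M p n \<subseteq> kernel_Delta p n \<and>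
         ((\<exists>S. S \<subseteq> {..<n} \<and> card S = DIM('a) \<and> \<not> affine_dependent (p ` S) \<and>
            (\<forall>i<n. p i \<in> affine hull (p ` S) \<longrightarrow> i \<in> S))
         \<longrightarrow> image_M p n = kernel_Delta p n)"
proof -
  have sub: "image_M p n \<subseteq> kernel_Delta p n"
  proof
    fix f assume "f \<in> image_M p n"
    then obtain v where f: "f = rigidity_map p n v" unfolding image_M_def by blast
    have "f \<in> edge_space n" unfolding f edge_space_def rigidity_map_def by auto
    moreover have "\<forall>C\<in>circuits p n. Delta_map p n f C = 0" by (simp add: f part1[OF inj])
    ultimately show "f \<in> kernel_Delta p n" unfolding kernel_Delta_def by blast
  qed
  show ?thesis
  proof (intro conjI impI)
    show "image_M p n \<subseteq> kernel_Delta p n" by (fact sub)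
  next
    assume H: "\<exists>S. S \<subseteq> {..<n} \<and> card S = DIM('a) \<and> \<not> affine_dependent (p ` S) \<and>
            (\<forall>i<n. p i \<in> affine hull (p ` S) \<longrightarrow> i \<in> S)"
    show "image_M p n = kernel_Delta p n"
  proof
    show "image_M p n \<subseteq> kernel_Delta p n" by (fact sub)
    obtain S where Sn: "S \<subseteq> {..<n}" and cS: "card S = DIM('a)" and indS: "\<not> affine_dependent (p ` S)"
      and hull: "\<forall>i<n. p i \<in> affine hull (p ` S) \<longrightarrow> i \<in> S" using H by blast
    show "kernel_Delta p n \<subseteq> image_M p n"
    proof
      fix f assume fk: "f \<in> kernel_Delta p n"
      then have fe: "f \<in> edge_space n" and fD: "\<forall>C\<in>circuits p n. Delta_map p n f C = 0"
        unfolding kernel_Delta_def by auto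
      obtain v where v: "\<forall>i j. i < j \<and> j < n \<and> (i \<in> S \<or> j \<in> S) \<longrightarrow> inner (v i - v j) (p i - p j) = f i j"
        using realize[OF inj Sn indS hull] by blast
      define g where "g = rigidity_map p n v"
      have gS: "f a b = g a b" if "a < b" "b < n" "a \<in> S \<or> b \<in> S" for a b
        using v that unfolding g_def rigidity_map_def by auto
      have "f i j = g i j" for i j
      proof (cases "i < j \<and> j < n")
        case False
        then show ?thesis using fe unfolding edge_space_def g_def rigidity_map_def by auto
      next
        case True
        show ?thesis
        proof (cases "i \<in> S \<or> j \<in> S")
          case True
          then show ?thesis using gS \<open>i < j \<and> j < n\<close> by blast
        next
          case False
          have ijf: "i < n" "j < n" "i \<notin> S" "j \<notin> S" "i \<noteq> j" using False \<open>i < j \<and> j < n\<close> by auto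
          obtain C where C: "is_circuit p n C" "i \<in> C" "j \<in> C" "C \<subseteq> insert i (insert j S)"
            using circuit_through[OF inj Sn indS cS hull ijf] by blast
          have Cc: "C \<in> circuits p n" using C circuits_def by auto
          have Cn: "C \<subseteq> {..<n}" using C(1) unfolding is_circuit_def by auto
          have fin: "finite C" using Cn finite_subset by blast
          have "0 = Delta_map p n f C - Delta_map p n g C"
            using fD Cc part1[OF inj Cc] g_def by simp
          also have "\<dots> = (\<Sum>(a,b)\<in>{(a,b). a \<in> C \<and> b \<in> C \<and> a < b}. circuit_weight p C a b * (f a b - g a b))"
            by (rule Delta_diff)
          also have "\<dots> = (\<Sum>(a,b)\<in>{(i,j)}. circuit_weight p C a b * (f a b - g a b))"
          proof (rule sum.mono_neutral_right)
            show "finite {(a,b). a \<in> C \<and> b \<in> C \<and> a < b}"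
              by (rule finite_subset[of _ "C \<times> C"]) (use fin in auto)
            show "{(i,j)} \<subseteq> {(a,b). a \<in> C \<and> b \<in> C \<and> a < b}" using C \<open>i < j \<and> j < n\<close> by auto
            show "\<forall>x\<in>{(a,b). a \<in> C \<and> b \<in> C \<and> a < b} - {(i,j)}.
                    (case x of (a,b) \<Rightarrow> circuit_weight p C a b * (f a b - g a b)) = 0"
            proof
              fix x assume x: "x \<in> {(a,b). a \<in> C \<and> b \<in> C \<and> a < b} - {(i,j)}"
              obtain a b where ab: "x = (a,b)" by fastforce
              have abC: "a \<in> C" "b \<in> C" "a < b" "(a,b) \<noteq> (i,j)" using x ab by auto
              have "a \<in> S \<or> b \<in> S"
              proof (rule ccontr)
                assume "\<not> (a \<in> S \<or> b \<in> S)"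
                then have "a \<in> {i,j}" "b \<in> {i,j}" using abC C(4) by auto
                then show False using abC \<open>i < j \<and> j < n\<close> by auto
              qed
              moreover have "a < b" "b < n" using x ab Cn by auto
              ultimately show "(case x of (a,b) \<Rightarrow> circuit_weight p C a b * (f a b - g a b)) = 0"
                using gS ab by simp
            qed
          qed
          also have "\<dots> = circuit_weight p C i j * (f i j - g i j)" by simp
          finally have z: "circuit_weight p C i j * (f i j - g i j) = 0" by simp
          have dep: "is_circuit_dependence p C (circuit_coeff p C)"
            unfolding circuit_coeff_def using circuit_dep_exists[OF inj C(1)] by (rule someI_ex)
          have "circuit_weight p C i j \<noteq> 0"
            using dep C(2,3) unfolding circuit_weight_def is_circuit_dependence_def by simp
          then show ?thesis using z by simp
        qed
      qed
      then have "f = g" by (intro ext)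
      then show "f \<in> image_M p n" unfolding g_def image_M_def by blast
    qed
  qed
  qed
qed

end
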